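(* Let $G$ be a finite connected graph with graph distance $d$ and let $\delta$ be its four-points hyperbolicity constant. Then $$\delta\le\max_{u_1,u_2,u_3,u_4\in V(G)}\ \min_{i\ne j} d(u_i,u_j).$$
   Context: The four-points hyperbolicity constant of $G$ is the smallest $\delta\ge0$ such that for all vertices $a,b,c,e$: $d(a,b)+d(c,e)\le\max\{d(a,c)+d(b,e),\ d(a,e)+d(b,c)\}+2\delta$. *)

theory Defs
  imports Complex_Main
begin

definition graph :: "'a set \<Rightarrow> ('a \<Rightarrow> 'a \<Rightarrow> bool) \<Rightarrow> bool" where
  "graph V E \<longleftrightarrow> (\<forall>u v. E u v \<longrightarrow> u \<in> V \<and> v \<in> V \<and> E v u \<and> u \<noteq> v)"

definition is_walk :: "'a set \<Rightarrow> ('a \<Rightarrow> 'a \<Rightarrow> bool) \<Rightarrow> 'a list \<Rightarrow> bool" where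
  "is_walk V E p \<longleftrightarrow> p \<noteq> [] \<and> set p \<subseteq> V \<and> (\<forall>i. Suc i < length p \<longrightarrow> E (p ! i) (p ! Suc i))"

definition connected_graph :: "'a set \<Rightarrow> ('a \<Rightarrow> 'a \<Rightarrow> bool) \<Rightarrow> bool" where
  "connected_graph V E \<longleftrightarrow> V \<noteq> {} \<and>
     (\<forall>u\<in>V. \<forall>v\<in>V. \<exists>p. is_walk V E p \<and> hd p = u \<and> last p = v)"

definition gdist :: "'a set \<Rightarrow> ('a \<Rightarrow> 'a \<Rightarrow> bool) \<Rightarrow> 'a \<Rightarrow> 'a \<Rightarrow> nat" where
  "gdist V E u v = (LEAST n. \<exists>p. is_walk V E p \<and> hd p = u \<and> last p = v \<and> length p = Suc n)"

definition four_point_cond :: "'a set \<Rightarrow> ('a \<Rightarrow> 'a \<Rightarrow> bool) \<Rightarrow> real \<Rightarrow> bool" where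
  "four_point_cond V E \<delta> \<longleftrightarrow> 0 \<le> \<delta> \<and>
     (\<forall>a\<in>V. \<forall>b\<in>V. \<forall>c\<in>V. \<forall>e\<in>V.
        real (gdist V E a b) + real (gdist V E c e)
          \<le> max (real (gdist V E a c) + real (gdist V E b e))
                (real (gdist V E a e) + real (gdist V E b c)) + 2 * \<delta>)"

definition hyperbolicity :: "'a set \<Rightarrow> ('a \<Rightarrow> 'a \<Rightarrow> bool) \<Rightarrow> real" where
  "hyperbolicity V E = (LEAST \<delta>. four_point_cond V E \<delta>)"

end

theory Submission imports Defs begin

lemma walk_single[simp]: "is_walk V E [x] \<longleftrightarrow> x \<in> V"
  by (auto simp: is_walk_def)

lemma walk_cons2[simp]: "is_walk V E (x # y # r) \<longleftrightarrow> x \<in> V \<and> E x y \<and> is_walk V E (y # r)"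
proof
  assume h: "is_walk V E (x # y # r)"
  have e: "E ((x#y#r) ! i) ((x#y#r) ! Suc i)" if "Suc i < length (x#y#r)" for i
    using h that unfolding is_walk_def by blast
  have "E x y" using e[of 0] by simp
  moreover have "E ((y # r) ! i) ((y # r) ! Suc i)" if "Suc i < length (y#r)" for i
    using e[of "Suc i"] that by simp
  ultimately show "x \<in> V \<and> E x y \<and> is_walk V E (y # r)" using h by (auto simp: is_walk_def)
next
  assume h: "x \<in> V \<and> E x y \<and> is_walk V E (y # r)"
  show "is_walk V E (x # y # r)" unfolding is_walk_def
  proof (intro conjI allI impI)
    fix i assume i: "Suc i < length (x # y # r)"
    show "E ((x # y # r) ! i) ((x # y # r) ! Suc i)"
    proof (cases i)
      case 0 then show ?thesis using h by simp
    next
      case (Suc j) then show ?thesis using h i unfolding is_walk_def by simp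
    qed
  qed (use h in \<open>auto simp: is_walk_def\<close>)
qed
lemma walk_append: "is_walk V E p \<Longrightarrow> is_walk V E q \<Longrightarrow> last p = hd q \<Longrightarrow> is_walk V E (p @ tl q)"
proof (induction p rule: induct_list012)
  case 1 then show ?case by (simp add: is_walk_def)
next
  case (2 x) then show ?case by (cases q) auto
next
  case (3 x y r) then show ?case by auto
qed

lemma walk_snoc: "is_walk V E p \<Longrightarrow> E (last p) x \<Longrightarrow> x \<in> V \<Longrightarrow> is_walk V E (p @ [x])"
proof (induction p rule: induct_list012)
  case 1 then show ?case by (simp add: is_walk_def)
next
  case (2 y) then show ?case by simp
next
  case (3 x y r) then show ?case by auto
qed

lemma walk_rev: assumes "graph V E" shows "is_walk V E p \<Longrightarrow> is_walk V E (rev p)"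
proof (induction p rule: induct_list012)
  case 1 then show ?case by (simp add: is_walk_def)
next
  case (2 y) then show ?case by simp
next
  case (3 x y r)
  then have "is_walk V E (rev (y#r))" by auto
  moreover have "E y x" using 3 assms by (auto simp: graph_def)
  moreover have "x \<in> V" using 3 by simp
  ultimately show ?case using walk_snoc[of V E "rev (y#r)" x] by simp
qed

lemma gdist_ex:
  assumes "connected_graph V E" "u \<in> V" "v \<in> V"
  shows "\<exists>p. is_walk V E p \<and> hd p = u \<and> last p = v \<and> length p = Suc (gdist V E u v)"
proof -
  obtain p where p: "is_walk V E p" "hd p = u" "last p = v" using assms unfolding connected_graph_def by blast
  then have "p \<noteq> []" by (simp add: is_walk_def)
  then have "\<exists>n p. is_walk V E p \<and> hd p = u \<and> last p = v \<and> length p = Suc n" using p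
    by (metis Suc_pred length_greater_0_conv)
  then show ?thesis unfolding gdist_def by (rule LeastI_ex)
qed

lemma gdist_le:
  "is_walk V E p \<Longrightarrow> hd p = u \<Longrightarrow> last p = v \<Longrightarrow> length p = Suc n \<Longrightarrow> gdist V E u v \<le> n"
  unfolding gdist_def by (rule Least_le) blast

lemma gdist_sym:
  assumes "graph V E" "connected_graph V E" "u \<in> V" "v \<in> V"
  shows "gdist V E u v \<le> gdist V E v u"
proof -
  obtain p where p: "is_walk V E p" "hd p = v" "last p = u" "length p = Suc (gdist V E v u)"
    using gdist_ex[OF assms(2,4,3)] by blast
  have "p \<noteq> []" using p by (simp add: is_walk_def)
  then show ?thesis using p walk_rev[OF assms(1) p(1)]
    by (intro gdist_le[of V E "rev p"]) (auto simp: hd_rev last_rev)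
qed

lemma gdist_tri:
  assumes "graph V E" "connected_graph V E" "u \<in> V" "v \<in> V" "w \<in> V"
  shows "gdist V E u w \<le> gdist V E u v + gdist V E v w"
proof -
  obtain p where p: "is_walk V E p" "hd p = u" "last p = v" "length p = Suc (gdist V E u v)"
    using gdist_ex[OF assms(2,3,4)] by blast
  obtain q where q: "is_walk V E q" "hd q = v" "last q = w" "length q = Suc (gdist V E v w)"
    using gdist_ex[OF assms(2,4,5)] by blast
  have ne: "p \<noteq> []" "q \<noteq> []" using p q by (auto simp: is_walk_def)
  have "last (p @ tl q) = w"
    using ne p q by (cases q) auto
  moreover have "hd (p @ tl q) = u" using ne p by simp
  ultimately show ?thesis using walk_append[OF p(1) q(1)] p q ne
    by (intro gdist_le[of V E "p @ tl q"]) auto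
qed


lemma quad_real:
  fixes ab ac ae bc be ce :: real
  assumes "ce \<le> ac + ae" "ae \<le> ab + be" "ab \<le> ac + bc" "ab \<le> ae + be"
     "ce \<le> bc + be" "ab \<le> ac + ce + be"
  shows "\<forall>x\<in>{ab, ac, ae, bc, be, ce}. ab + ce \<le> max (ac + be) (ae + bc) + 2 * x"
proof -
  have mx: "ac + be \<le> max (ac + be) (ae + bc)" "ae + bc \<le> max (ac + be) (ae + bc)" by auto
  show ?thesis using assms mx by auto
qed

lemma min_bound:
  fixes S :: "nat set"
  assumes "finite S" "S \<noteq> {}" "\<forall>x\<in>real ` S. f \<le> g + 2 * x"
  shows "f \<le> g + 2 * real (Min S)"
  using assms Min_in by blast

lemma quad_bound:
  assumes g: "graph V E" "connected_graph V E" and V: "a \<in> V" "b \<in> V" "c \<in> V" "e \<in> V"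
  shows "real (gdist V E a b) + real (gdist V E c e)
          \<le> max (real (gdist V E a c) + real (gdist V E b e))
                (real (gdist V E a e) + real (gdist V E b c)) + 2 * real (Min {gdist V E a b, gdist V E a c, gdist V E a e,
                    gdist V E b c, gdist V E b e, gdist V E c e})"
proof (rule min_bound)
  let ?d = "\<lambda>x y. real (gdist V E x y)"
  have s: "?d x y = ?d y x" if "x \<in> V" "y \<in> V" for x y
    using gdist_sym[OF g that] gdist_sym[OF g that(2,1)] by simp
  have t: "?d x z \<le> ?d x y + ?d y z" if "x \<in> V" "y \<in> V" "z \<in> V" for x y z
    using gdist_tri[OF g that] by simp
  have h1: "?d c e \<le> ?d a c + ?d a e" using t[OF V(3) V(1) V(4)] s[OF V(1) V(3)] by simp
  have h2: "?d a e \<le> ?d a b + ?d b e" using t[OF V(1) V(2) V(4)] by simp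
  have h3: "?d a b \<le> ?d a c + ?d b c" using t[OF V(1) V(3) V(2)] s[OF V(2) V(3)] by simp
  have h4: "?d a b \<le> ?d a e + ?d b e" using t[OF V(1) V(4) V(2)] s[OF V(2) V(4)] by simp
  have h5: "?d c e \<le> ?d b c + ?d b e" using t[OF V(3) V(2) V(4)] s[OF V(2) V(3)] by simp
  have h6: "?d a b \<le> ?d a c + ?d c e + ?d b e"
    using t[OF V(1) V(3) V(2)] t[OF V(3) V(4) V(2)] s[OF V(2) V(4)] by simp
  have "\<forall>x\<in>{?d a b, ?d a c, ?d a e, ?d b c, ?d b e, ?d c e}.
     ?d a b + ?d c e \<le> max (?d a c + ?d b e) (?d a e + ?d b c) + 2 * x"
    by (rule quad_real[OF h1 h2 h3 h4 h5 h6])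
  then show "\<forall>x\<in>real ` {gdist V E a b, gdist V E a c, gdist V E a e,
                    gdist V E b c, gdist V E b e, gdist V E c e}.
     ?d a b + ?d c e \<le> max (?d a c + ?d b e) (?d a e + ?d b c) + 2 * x"
    by (simp only: image_insert image_empty)
qed auto

theorem mainTheorem6:
  fixes V :: "'a set" and E :: "'a \<Rightarrow> 'a \<Rightarrow> bool"
  assumes "finite V" and "graph V E" and "connected_graph V E"
  shows "hyperbolicity V E \<le>
    real (Max {Min {gdist V E u1 u2, gdist V E u1 u3, gdist V E u1 u4,
                    gdist V E u2 u3, gdist V E u2 u4, gdist V E u3 u4}
              | u1 u2 u3 u4. u1 \<in> V \<and> u2 \<in> V \<and> u3 \<in> V \<and> u4 \<in> V})"
    (is "_ \<le> real (Max ?S)")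
proof -
  let ?M = "real (Max ?S)"
  let ?f = "\<lambda>(a,b,c,e). (real (gdist V E a b) + real (gdist V E c e)
          - max (real (gdist V E a c) + real (gdist V E b e))
                (real (gdist V E a e) + real (gdist V E b c))) / 2"
  let ?Q = "V \<times> V \<times> V \<times> V"
  define d0 where "d0 = Max (insert 0 (?f ` ?Q))"
  have finQ: "finite (?f ` ?Q)" using assms(1) by simp
  have P: "four_point_cond V E \<delta> \<longleftrightarrow> d0 \<le> \<delta>" for \<delta>
  proof -
    have "four_point_cond V E \<delta> \<longleftrightarrow> 0 \<le> \<delta> \<and> (\<forall>q\<in>?Q. ?f q \<le> \<delta>)"
      unfolding four_point_cond_def by (auto simp: field_simps)
    also have "\<dots> \<longleftrightarrow> d0 \<le> \<delta>" unfolding d0_def using finQ by (auto simp: Max_le_iff)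
    finally show ?thesis .
  qed
  have L: "hyperbolicity V E = d0" unfolding hyperbolicity_def P
    by (rule Least_equality) auto
  define mn where "mn = (\<lambda>u1 u2 u3 u4. Min {gdist V E u1 u2, gdist V E u1 u3, gdist V E u1 u4,
                    gdist V E u2 u3, gdist V E u2 u4, gdist V E u3 u4})"
  have Seq: "?S = (\<lambda>(u1,u2,u3,u4). mn u1 u2 u3 u4) ` ?Q"
  proof -
    have "?S = {mn u1 u2 u3 u4 | u1 u2 u3 u4. u1 \<in> V \<and> u2 \<in> V \<and> u3 \<in> V \<and> u4 \<in> V}"
      unfolding mn_def by (rule refl)
    also have "\<dots> = (\<lambda>(u1,u2,u3,u4). mn u1 u2 u3 u4) ` ?Q" by (auto simp: image_iff; blast)
    finally show ?thesis .
  qed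
  have finS: "finite ?S" unfolding Seq using assms(1) by simp
  have "four_point_cond V E ?M" unfolding four_point_cond_def
  proof (intro conjI ballI)
    fix a b c e assume V: "a \<in> V" "b \<in> V" "c \<in> V" "e \<in> V"
    have "mn a b c e \<in> ?S" unfolding Seq using V by (intro image_eqI[where x="(a,b,c,e)"]) simp_all
    then have "mn a b c e \<le> Max ?S" using finS by (intro Max_ge)
    then have "Min {gdist V E a b, gdist V E a c, gdist V E a e,
                    gdist V E b c, gdist V E b e, gdist V E c e} \<le> Max ?S" unfolding mn_def .
    then show "real (gdist V E a b) + real (gdist V E c e)
          \<le> max (real (gdist V E a c) + real (gdist V E b e))
                (real (gdist V E a e) + real (gdist V E b c)) + 2 * ?M"
      using quad_bound[OF assms(2,3) V] by linarith
  qed simp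
  then show ?thesis using P L by simp
qed

end
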